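(* Let $1\le p\le 2$, let $\theta_c\in[0,\frac{\pi}{2}]$ be the angle with $\cos^2\theta_c=\frac{p-1}{p}$, and let $G(\theta)=\cos^{p-1}(\theta)\sin(\theta)$ on $[0,\frac{\pi}{2}]$. Then: (a) $G$ is increasing on $[0,\theta_c]$ and decreasing on $[\theta_c,\frac{\pi}{2}]$. (b) For $0\le\theta\le\frac{\pi}{4}$ we have $G(\frac{\pi}{2}-\theta)\ge G(\theta)$, with equality only at the endpoints. (c) If $1\le p\le 1.73$, then for every $\alpha>0$ with $\theta_c+\alpha<\frac{\pi}{2}$, $G(\theta_c-\alpha)\ge G(\theta_c+\alpha)$. (d) If $1\le p\le 1.73$ and $x\le\theta_c\le y$ (in $[0,\frac{\pi}{2}]$) satisfy $G(x)=G(y)$, then $\frac{1}{2}(x+y)\le\theta_c$. *)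

theory Defs
  imports Complex_Main
begin

text \<open>Isabelle's powr has 0 powr 0 = 0, so the case p = 1 (where cos^0 = 1,
  i.e. G = sin) is treated separately to respect the convention 0^0 = 1.\<close>
definition Gfun :: "real \<Rightarrow> real \<Rightarrow> real" where
  "Gfun p \<theta> = (if p = 1 then sin \<theta> else cos \<theta> powr (p - 1) * sin \<theta>)"

end

theory Submission
  imports Defs
begin

definition Lf :: "real \<Rightarrow> real \<Rightarrow> real" where
  "Lf q x = q * ln (cos x) + ln (sin x)"

lemma G_exp:
  assumes "0 < x" "x < pi/2"
  shows "Gfun p x = exp (Lf (p - 1) x)"
proof -
  have c: "cos x > 0" using assms by (intro cos_gt_zero_pi) auto
  have s: "sin x > 0" using assms by (intro sin_gt_zero) auto
  show ?thesis using c s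
    by (auto simp: Gfun_def Lf_def exp_add powr_def)
qed

lemma Lf_deriv:
  assumes "0 < x" "x < pi/2"
  shows "DERIV (Lf q) x :> (cos x ^ 2 - q * sin x ^ 2) / (sin x * cos x)"
proof -
  have c: "cos x > 0" using assms by (intro cos_gt_zero_pi) auto
  have s: "sin x > 0" using assms by (intro sin_gt_zero) auto
  have "DERIV (Lf q) x :> q * (- sin x / cos x) + cos x / sin x"
    unfolding Lf_def[abs_def] using c s
    by (auto intro!: derivative_eq_intros)
  moreover have "q * (- sin x / cos x) + cos x / sin x = (cos x ^ 2 - q * sin x ^ 2) / (sin x * cos x)"
    using c s by (simp add: field_simps power2_eq_square)
  ultimately show ?thesis by simp
qed

lemma G_pos:
  assumes "0 < x" "x < pi/2"
  shows "Gfun p x > 0"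
  using G_exp[OF assms] by simp

lemma G_zero: "Gfun p 0 = 0"
  by (simp add: Gfun_def)

lemma G_halfpi: "p \<noteq> 1 \<Longrightarrow> Gfun p (pi/2) = 0"
  by (simp add: Gfun_def)


lemma partA_gt1:
  fixes p tc :: real
  assumes "1 < p" "p \<le> 2" "0 < tc" "tc < pi/2" "(cos tc)\<^sup>2 = (p - 1) / p"
  shows "strict_mono_on {0..tc} (Gfun p) \<and> strict_antimono_on {tc..pi/2} (Gfun p)"
proof
  have ctc: "cos tc > 0" using assms by (intro cos_gt_zero_pi) auto
  show "strict_mono_on {0..tc} (Gfun p)"
  proof (rule monotone_onI)
    fix x y assume xy0: "x \<in> {0..tc}" "y \<in> {0..tc}" "x < y"
    then have xy: "0 \<le> x" "x < y" "y \<le> tc" by auto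
    show "Gfun p x < Gfun p y"
    proof (cases "x = 0")
      case True
      then show ?thesis using G_pos[of y p] xy assms by (simp add: G_zero)
    next
      case False
      have "Lf (p-1) x < Lf (p-1) y"
      proof (rule DERIV_pos_imp_increasing_open[OF xy(2)])
        fix z assume z: "x < z" "z < y"
        have z0: "0 < z" "z < pi/2" using z xy False assms by auto
        have cz: "cos z > cos tc" using z xy assms by (subst cos_mono_less_eq) auto
        have "(cos z)^2 > (cos tc)^2" using cz ctc by (intro power_strict_mono) auto
        hence "(p-1)/p < (cos z)^2" using assms by simp
        hence "p * (cos z)^2 > p - 1" using assms by (simp add: pos_divide_less_eq mult.commute)
        moreover have "cos z ^ 2 - (p-1) * sin z ^ 2 = p * cos z ^ 2 - (p - 1)"
          by (simp add: sin_squared_eq algebra_simps)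
        ultimately have pos: "cos z ^ 2 - (p-1) * sin z ^ 2 > 0" by linarith
        have "sin z > 0" "cos z > 0" using z0 by (auto intro: sin_gt_zero cos_gt_zero_pi)
        then have "(cos z ^ 2 - (p-1) * sin z ^ 2) / (sin z * cos z) > 0"
          using pos by (intro divide_pos_pos) auto
        then show "\<exists>d. DERIV (Lf (p-1)) z :> d \<and> d > 0"
          using Lf_deriv[OF z0, of "p-1"] by blast
      next
        show "continuous_on {x..y} (Lf (p-1))"
          by (intro continuous_at_imp_continuous_on ballI DERIV_isCont[OF Lf_deriv])
            (use xy False assms in auto)
      qed
      then show ?thesis using G_exp[of x p] G_exp[of y p] xy False assms by simp
    qed
  qed
  show "strict_antimono_on {tc..pi/2} (Gfun p)"
  proof (rule monotone_onI)
    fix x y assume xy0: "x \<in> {tc..pi/2}" "y \<in> {tc..pi/2}" "x < y"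
    then have xy: "tc \<le> x" "x < y" "y \<le> pi/2" by auto
    show "Gfun p y < Gfun p x"
    proof (cases "y = pi/2")
      case True
      then have "Gfun p y = 0" using G_halfpi[of p] assms by (metis less_irrefl)
      then show ?thesis using G_pos[of x p] xy assms by simp
    next
      case False
      have "Lf (p-1) y < Lf (p-1) x"
      proof (rule DERIV_neg_imp_decreasing_open[OF xy(2)])
        fix z assume z: "x < z" "z < y"
        have z0: "0 < z" "z < pi/2" using z xy False assms by auto
        have cz: "cos z < cos tc" using z xy assms by (subst cos_mono_less_eq) auto
        have cz0: "cos z > 0" using z0 by (auto intro: cos_gt_zero_pi)
        have "(cos z)^2 < (cos tc)^2" using cz cz0 by (intro power_strict_mono) auto
        hence "(cos z)^2 < (p-1)/p" using assms by simp
        hence "p * (cos z)^2 < p - 1" using assms by (simp add: pos_less_divide_eq mult.commute)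
        moreover have "cos z ^ 2 - (p-1) * sin z ^ 2 = p * cos z ^ 2 - (p - 1)"
          by (simp add: sin_squared_eq algebra_simps)
        ultimately have neg: "cos z ^ 2 - (p-1) * sin z ^ 2 < 0" by linarith
        have "sin z > 0" using z0 by (auto intro: sin_gt_zero)
        then have "(cos z ^ 2 - (p-1) * sin z ^ 2) / (sin z * cos z) < 0"
          using neg cz0 by (intro divide_neg_pos) auto
        then show "\<exists>d. DERIV (Lf (p-1)) z :> d \<and> d < 0"
          using Lf_deriv[OF z0, of "p-1"] by blast
      next
        show "continuous_on {x..y} (Lf (p-1))"
          by (intro continuous_at_imp_continuous_on ballI DERIV_isCont[OF Lf_deriv])
            (use xy False assms in auto)
      qed
      then show ?thesis using G_exp[of x p] G_exp[of y p] xy False assms by simp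
    qed
  qed
qed


lemma keyE:
  fixes q c d C S :: real
  assumes "(q + 1) * c^2 = q" "c^2 + d^2 = 1" "C^2 + S^2 = 1"
  shows "(c*C + d*S) * (c*C - d*S) - q * ((d*C - c*S) * (d*C + c*S)) = S^2 * (q - 1)"
proof -
  have "(c*C + d*S) * (c*C - d*S) - q * ((d*C - c*S) * (d*C + c*S))
      = C^2 * ((q+1)*c^2 - q) + S^2 * ((q+1) * c^2 - 1) - C^2 * q * (c^2 + d^2 - 1) - S^2 * (c^2 + d^2 - 1)"
    by (simp add: power2_eq_square algebra_simps)
  also have "\<dots> = S^2 * (q - 1)" using assms by simp
  finally show ?thesis .
qed

lemma partC_gt1:
  fixes p tc a :: real
  assumes "1 < p" "p \<le> 2" "pi/4 \<le> tc" "tc < pi/2" "(cos tc)\<^sup>2 = (p - 1) / p"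
    and "0 < a" "tc + a < pi/2"
  shows "Gfun p (tc - a) \<ge> Gfun p (tc + a)"
proof -
  define q where "q = p - 1"
  define h where "h s = Lf q (tc - s) - Lf q (tc + s)" for s
  have "h 0 \<le> h a"
  proof (rule DERIV_nonneg_imp_nondecreasing[of 0 a h])
    show "0 \<le> a" using assms by simp
    fix s assume s: "0 \<le> s" "s \<le> a"
    define u where "u = tc - s"
    define v where "v = tc + s"
    have u0: "0 < u" "u < pi/2" using s assms unfolding u_def by auto
    have v0: "0 < v" "v < pi/2" using s assms unfolding v_def by auto
    have su: "sin u > 0" "cos u > 0" using u0 by (auto intro: sin_gt_zero cos_gt_zero_pi)
    have sv: "sin v > 0" "cos v > 0" using v0 by (auto intro: sin_gt_zero cos_gt_zero_pi)
    define Lu where "Lu = (cos u ^ 2 - q * sin u ^ 2) / (sin u * cos u)"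
    define Lv where "Lv = (cos v ^ 2 - q * sin v ^ 2) / (sin v * cos v)"
    have d1: "DERIV (\<lambda>s. Lf q (tc - s)) s :> Lu * (-1)"
      unfolding Lu_def u_def
      by (rule DERIV_chain2[where f="Lf q" and g="\<lambda>s. tc - s", OF Lf_deriv[OF u0[unfolded u_def]]]) (auto intro!: derivative_eq_intros)
    have d2: "DERIV (\<lambda>s. Lf q (tc + s)) s :> Lv * 1"
      unfolding Lv_def v_def
      by (rule DERIV_chain2[where f="Lf q" and g="\<lambda>s. tc + s", OF Lf_deriv[OF v0[unfolded v_def]]]) (auto intro!: derivative_eq_intros)
    have dh: "DERIV h s :> Lu * (-1) - Lv * 1"
      unfolding h_def[abs_def] by (rule DERIV_diff[OF d1 d2])
    have sum: "Lu + Lv = ((cos u ^ 2 - q * sin u ^ 2) * (sin v * cos v) + (cos v ^ 2 - q * sin v ^ 2) * (sin u * cos u)) / (sin u * cos u * sin v * cos v)"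
      unfolding Lu_def Lv_def using su sv by (simp add: field_simps)
    also have "\<dots> = ((sin u * cos v + cos u * sin v) * (cos u * cos v - q * (sin u * sin v))) / (sin u * cos u * sin v * cos v)"
      by (simp add: power2_eq_square algebra_simps)
    finally have sum2: "Lu + Lv = \<dots>" .
    have E: "cos u * cos v - q * (sin u * sin v) = (sin s)^2 * (q - 1)"
      unfolding u_def v_def cos_diff cos_add sin_diff sin_add
    proof (rule keyE)
      show "(q + 1) * (cos tc)^2 = q" using assms unfolding q_def by simp
      show "(cos tc)^2 + (sin tc)^2 = 1" by simp
      show "(cos s)^2 + (sin s)^2 = 1" by simp
    qed
    have "(sin s)^2 * (q - 1) \<le> 0" using assms unfolding q_def
      by (intro mult_nonneg_nonpos) auto
    moreover have "sin u * cos v + cos u * sin v \<ge> 0" using su sv by simp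
    ultimately have "(sin u * cos v + cos u * sin v) * (cos u * cos v - q * (sin u * sin v)) \<le> 0"
      using E by (simp add: mult_nonneg_nonpos)
    moreover have "sin u * cos u * sin v * cos v > 0" using su sv by simp
    ultimately have "Lu + Lv \<le> 0" using sum2 by (simp add: divide_nonpos_pos)
    then show "\<exists>y. DERIV h s :> y \<and> 0 \<le> y" using dh by (intro exI[of _ "Lu * (-1) - Lv * 1"]) simp
  qed
  then have "Lf q (tc + a) \<le> Lf q (tc - a)" unfolding h_def by simp
  moreover have "pi/4 < pi/2" by simp
  ultimately show ?thesis using G_exp[of "tc - a" p] G_exp[of "tc + a" p] assms
    unfolding q_def by simp
qed


lemma partB_pos:
  fixes p t :: real
  assumes "1 \<le> p" "p \<le> 2" "0 < t" "t \<le> pi/4"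
  shows "Gfun p (pi / 2 - t) \<ge> Gfun p t \<and>
         (p < 2 \<and> Gfun p (pi / 2 - t) = Gfun p t \<longrightarrow> t = pi / 4)"
proof -
  define q where "q = p - 1"
  have s: "sin t > 0" using assms by (intro sin_gt_zero) auto
  have c: "cos t > 0" using assms by (intro cos_gt_zero_pi) auto
  have cs: "cos t = sin (pi/2 - t)" by (simp add: sin_cos_eq)
  have sc: "sin t \<le> cos t"
    unfolding cs using assms by (subst sin_mono_le_eq) auto
  have scl: "t < pi/4 \<Longrightarrow> sin t < cos t"
    unfolding cs using assms by (subst sin_mono_less_eq) auto
  have G1: "Gfun p (pi/2 - t) = sin t powr q * cos t"
  proof -
    have "sin (pi/2 - t) = cos t" "cos (pi/2 - t) = sin t" by (simp_all add: sin_diff cos_diff)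
    then show ?thesis using s by (auto simp: Gfun_def q_def)
  qed
  have G2: "Gfun p t = cos t powr q * sin t"
    using c by (auto simp: Gfun_def q_def)
  define X where "X = sin t powr q * cos t powr q"
  have X: "X > 0" unfolding X_def using s c by simp
  have e1: "Gfun p (pi/2 - t) = X * cos t powr (1 - q)"
    unfolding G1 X_def using c by (simp add: powr_add[symmetric] mult.assoc)
  have e2: "Gfun p t = X * sin t powr (1 - q)"
    unfolding G2 X_def using s by (simp add: powr_add[symmetric] mult.assoc mult.left_commute)
  have "sin t powr (1 - q) \<le> cos t powr (1 - q)"
    using sc s assms unfolding q_def by (intro powr_mono2) auto
  hence A: "Gfun p (pi / 2 - t) \<ge> Gfun p t" unfolding e1 e2 using X by simp
  have B: "t = pi/4" if "p < 2" "Gfun p (pi / 2 - t) = Gfun p t"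
  proof (rule ccontr)
    assume "t \<noteq> pi/4"
    hence "t < pi/4" using assms by simp
    hence "sin t powr (1 - q) < cos t powr (1 - q)"
      using scl s that unfolding q_def by (intro powr_less_mono2) auto
    hence "Gfun p (pi / 2 - t) > Gfun p t" unfolding e1 e2 using X by simp
    thus False using that by simp
  qed
  show ?thesis using A B by blast
qed


lemma tc_facts:
  fixes p tc :: real
  assumes "1 \<le> p" "p \<le> 2" "0 \<le> tc" "tc \<le> pi / 2" "(cos tc)\<^sup>2 = (p - 1) / p"
  shows "(p = 1 \<and> tc = pi/2) \<or> (1 < p \<and> 0 < tc \<and> tc < pi/2 \<and> pi/4 \<le> tc)"
proof (cases "p = 1")
  case True
  then have "cos tc = 0" using assms by simp
  moreover have "tc < pi/2 \<Longrightarrow> cos tc > 0" using assms by (intro cos_gt_zero_pi) auto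
  ultimately have "tc = pi/2" using assms by force
  then show ?thesis using True by simp
next
  case False
  then have p1: "1 < p" using assms by simp
  have "tc \<noteq> pi/2"
  proof
    assume "tc = pi/2"
    then have "(cos tc)^2 = 0" by (simp only: cos_pi_half) simp
    then have "(p - 1) / p = 0" using assms by simp
    then show False using p1 by simp
  qed
  moreover have "tc \<noteq> 0"
  proof
    assume "tc = 0"
    then have "(p - 1) / p = 1" using assms by simp
    then show False using p1 by (simp add: divide_eq_1_iff)
  qed
  moreover have "pi/4 \<le> tc"
  proof (rule ccontr)
    assume "\<not> pi/4 \<le> tc"
    then have "cos tc > cos (pi/4)" using assms by (subst cos_mono_less_eq) auto
    then have "cos tc > sqrt 2 / 2" by (simp add: cos_45)
    then have "(cos tc)^2 > (sqrt 2 / 2)^2" by (intro power_strict_mono) auto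
    then have "(p - 1) / p > 1/2" using assms by (simp add: power_divide)
    then have "p - 1 > p / 2" using p1 by (simp add: pos_less_divide_eq)
    then show False using assms by simp
  qed
  ultimately show ?thesis using p1 assms by auto
qed

theorem lemma2p3:
  fixes p \<theta>c :: real
  assumes hp: "1 \<le> p" "p \<le> 2"
    and hc: "0 \<le> \<theta>c" "\<theta>c \<le> pi / 2" "(cos \<theta>c)\<^sup>2 = (p - 1) / p"
  shows "(strict_mono_on {0..\<theta>c} (Gfun p) \<and> strict_antimono_on {\<theta>c..pi/2} (Gfun p))
    \<and> (\<forall>\<theta>. 0 \<le> \<theta> \<and> \<theta> \<le> pi / 4 \<longrightarrow>
           Gfun p (pi / 2 - \<theta>) \<ge> Gfun p \<theta> \<and>
           (p < 2 \<and> Gfun p (pi / 2 - \<theta>) = Gfun p \<theta> \<longrightarrow> \<theta> = 0 \<or> \<theta> = pi / 4))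
    \<and> (p \<le> 173 / 100 \<longrightarrow>
           (\<forall>\<alpha>. \<alpha> > 0 \<and> \<theta>c + \<alpha> < pi / 2 \<longrightarrow> Gfun p (\<theta>c - \<alpha>) \<ge> Gfun p (\<theta>c + \<alpha>)))
    \<and> (p \<le> 173 / 100 \<longrightarrow>
           (\<forall>x y. 0 \<le> x \<and> x \<le> \<theta>c \<and> \<theta>c \<le> y \<and> y \<le> pi / 2 \<and> Gfun p x = Gfun p y
              \<longrightarrow> (x + y) / 2 \<le> \<theta>c))"
proof -
  note tf = tc_facts[OF hp hc]
  have A: "strict_mono_on {0..\<theta>c} (Gfun p) \<and> strict_antimono_on {\<theta>c..pi/2} (Gfun p)"
  proof (cases "p = 1")
    case True
    then have tc: "\<theta>c = pi/2" using tf by auto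
    have "strict_mono_on {0..\<theta>c} (Gfun p)"
    proof (rule monotone_onI)
      fix x y assume "x \<in> {0..\<theta>c}" "y \<in> {0..\<theta>c}" "x < y"
      then show "Gfun p x < Gfun p y" using True tc
        by (simp add: Gfun_def sin_mono_less_eq)
    qed
    moreover have "strict_antimono_on {\<theta>c..pi/2} (Gfun p)"
      by (rule monotone_onI) (use tc in auto)
    ultimately show ?thesis by simp
  next
    case False
    then show ?thesis using tf hp hc by (intro partA_gt1) auto
  qed
  have B: "\<forall>\<theta>. 0 \<le> \<theta> \<and> \<theta> \<le> pi / 4 \<longrightarrow>
           Gfun p (pi / 2 - \<theta>) \<ge> Gfun p \<theta> \<and>
           (p < 2 \<and> Gfun p (pi / 2 - \<theta>) = Gfun p \<theta> \<longrightarrow> \<theta> = 0 \<or> \<theta> = pi / 4)"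
  proof (intro allI impI)
    fix t :: real assume t: "0 \<le> t \<and> t \<le> pi / 4"
    show "Gfun p (pi / 2 - t) \<ge> Gfun p t \<and>
           (p < 2 \<and> Gfun p (pi / 2 - t) = Gfun p t \<longrightarrow> t = 0 \<or> t = pi / 4)"
    proof (cases "t = 0")
      case True
      then show ?thesis by (simp add: Gfun_def)
    next
      case False
      then show ?thesis using partB_pos[of p t] hp t by auto
    qed
  qed
  have C: "p \<le> 173 / 100 \<longrightarrow>
           (\<forall>\<alpha>. \<alpha> > 0 \<and> \<theta>c + \<alpha> < pi / 2 \<longrightarrow> Gfun p (\<theta>c - \<alpha>) \<ge> Gfun p (\<theta>c + \<alpha>))"
    using tf partC_gt1[of p \<theta>c] hp hc by auto
  have D: "\<forall>x y. 0 \<le> x \<and> x \<le> \<theta>c \<and> \<theta>c \<le> y \<and> y \<le> pi / 2 \<and> Gfun p x = Gfun p y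
              \<longrightarrow> (x + y) / 2 \<le> \<theta>c"
  proof (intro allI impI)
    fix x y assume xy: "0 \<le> x \<and> x \<le> \<theta>c \<and> \<theta>c \<le> y \<and> y \<le> pi / 2 \<and> Gfun p x = Gfun p y"
    have mono: "\<And>u v. u \<in> {0..\<theta>c} \<Longrightarrow> v \<in> {0..\<theta>c} \<Longrightarrow> u < v \<Longrightarrow> Gfun p u < Gfun p v"
      using A by (auto simp: monotone_on_def)
    show "(x + y) / 2 \<le> \<theta>c"
    proof (cases "y = \<theta>c")
      case True
      have "x = \<theta>c"
      proof (rule ccontr)
        assume "x \<noteq> \<theta>c"
        then have "Gfun p x < Gfun p \<theta>c" using xy hc by (intro mono) auto
        then show False using xy True by simp
      qed
      then show ?thesis using True by simp
    next
      case False
      then have p1: "1 < p" "0 < \<theta>c" "\<theta>c < pi/2" "pi/4 \<le> \<theta>c" using tf xy by auto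
      show ?thesis
      proof (cases "y = pi/2")
        case True
        then have "Gfun p y = 0" using G_halfpi[of p] p1 by (metis less_irrefl)
        then have "x = 0" using G_pos[of x p] xy p1 by (cases "x = 0") auto
        then show ?thesis using True p1 by simp
      next
        case False
        define a where "a = y - \<theta>c"
        have a: "a > 0" "\<theta>c + a < pi/2" using False xy \<open>y \<noteq> \<theta>c\<close> unfolding a_def by auto
        have "Gfun p (\<theta>c - a) \<ge> Gfun p y"
          using partC_gt1[of p \<theta>c a] p1 hp hc a unfolding a_def by simp
        have "x \<le> \<theta>c - a"
        proof (rule ccontr)
          assume "\<not> x \<le> \<theta>c - a"
          then have "Gfun p (\<theta>c - a) < Gfun p x" using xy a p1 by (intro mono) auto
          then show False using xy \<open>Gfun p (\<theta>c - a) \<ge> Gfun p y\<close> by simp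
        qed
        then show ?thesis unfolding a_def by simp
      qed
    qed
  qed
  show ?thesis using A B C D by blast
qed

end
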